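(* Let $F(a,b,c)=\big(\tfrac{c-b}{a},\tfrac{c+b}{a},2\ln a\big)$ for $a>0$, $b,c\in\mathbb{R}$. For a compact set $X\subset(0,\infty)\times\mathbb{R}^2$ let $\mathcal{B}_X=\{\begin{pmatrix}a&b\\c&d\end{pmatrix}\in PSL_2(\mathbb{R}):F(a,b,c)\in X\}$ (with $a>0$, $ad-bc=1$). Then $$\mathrm{vol}(\mathcal{B}_X)=\int_Xe^{x_3}\,dx,$$ where $x=(x_1,x_2,x_3)$, the integral is with respect to Euclidean volume, and $\mathrm{vol}$ is the standard volume form on $PSL_2(\mathbb{R})$.
   Context: The standard volume on $PSL_2(\mathbb{R})\cong T_1(\mathbb{H}^2)$ is the one for which, for a closed hyperbolic surface $S$, the induced volume of $T_1(S)$ equals $2\pi\,\mathrm{area}(S)$ (hyperbolic area times angle in the fibers). *)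

theory Defs
  imports "HOL-Analysis.Analysis"
begin

text \<open>A 2x2 real matrix (a b; c d) is represented as the tuple (a,b,c,d).
  An element of PSL_2(R) is the class {g, -g} of a matrix g in SL_2(R).\<close>

definition mat_neg :: "real \<times> real \<times> real \<times> real \<Rightarrow> real \<times> real \<times> real \<times> real" where
  "mat_neg g = (case g of (a,b,c,d) \<Rightarrow> (-a,-b,-c,-d))"

text \<open>Iwasawa parametrisation g = n(x) a(y) k(theta) of SL_2(R):
  n(x) = (1 x; 0 1), a(y) = diag(sqrt y, 1/sqrt y), k(theta) = rotation by theta.
  Under PSL_2(R) = T_1(H^2), g corresponds to the base point g.i = x + i y and the
  unit tangent vector at it of angle 2 theta (measured in the upper half plane).\<close>

definition iwasawa :: "real \<Rightarrow> real \<Rightarrow> real \<Rightarrow> real \<times> real \<times> real \<times> real" where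
  "iwasawa x y \<theta> =
     (sqrt y * cos \<theta> + x * sin \<theta> / sqrt y,
      - sqrt y * sin \<theta> + x * cos \<theta> / sqrt y,
      sin \<theta> / sqrt y,
      cos \<theta> / sqrt y)"

text \<open>Standard volume on PSL_2(R) = T_1(H^2): hyperbolic area (dx dy / y^2) times
  the angle phi in the fibres (phi in [0, 2 pi)). A set B of matrices is read as the
  set of classes {g,-g} that meet B.\<close>

definition psl2_std_vol :: "(real \<times> real \<times> real \<times> real) set \<Rightarrow> ennreal" where
  "psl2_std_vol B =
     (\<integral>\<^sup>+ p. indicator {(x, y, \<phi>). 0 < y \<and> 0 \<le> \<phi> \<and> \<phi> < 2 * pi \<and>
                 (iwasawa x y (\<phi> / 2) \<in> B \<or> mat_neg (iwasawa x y (\<phi> / 2)) \<in> B)} p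
              * ennreal (1 / (fst (snd p))\<^sup>2) \<partial>(lborel :: (real \<times> real \<times> real) measure))"

definition F_map :: "real \<Rightarrow> real \<Rightarrow> real \<Rightarrow> real \<times> real \<times> real" where
  "F_map a b c = ((c - b) / a, (c + b) / a, 2 * ln a)"

definition calB :: "(real \<times> real \<times> real) set \<Rightarrow> (real \<times> real \<times> real \<times> real) set" where
  "calB X = {(a, b, c, d). 0 < a \<and> a * d - b * c = 1 \<and> F_map a b c \<in> X}"

end

theory Submission
  imports Defs
begin


definition Tr :: "real \<times> real \<times> real \<Rightarrow> real^3" where
  "Tr p = (\<chi> i. if i = 1 then fst p else if i = 2 then fst (snd p) else snd (snd p))"

lemma Tr_nth[simp]: "Tr p $ 1 = fst p" "Tr p $ 2 = fst (snd p)" "Tr p $ 3 = snd (snd p)"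
  by (simp_all add: Tr_def)

lemma Tr_inj: "Tr p = Tr q \<longleftrightarrow> p = q"
  by (metis Tr_nth prod_eq_iff)

lemma Tr_continuous: "continuous_on UNIV Tr"
  unfolding Tr_def
proof (intro continuous_on_vec_lambda)
  fix i :: 3
  consider "i = 1" | "i = 2" | "i = 3" using exhaust_3 by blast
  then show "continuous_on UNIV (\<lambda>x::real\<times>real\<times>real. if i = 1 then fst x else if i = 2 then fst (snd x) else snd (snd x))"
    by cases (simp_all add: continuous_on_fst continuous_on_snd continuous_on_id)
qed

lemma em_times:
  fixes A :: "'a::euclidean_space set" and B :: "'b::euclidean_space set"
  assumes "A \<in> sets borel" "B \<in> sets borel"
  shows "emeasure lborel (A \<times> B) = emeasure lborel A * emeasure lborel B"
  using assms lborel.emeasure_pair_measure_Times[of A lborel B] by (simp add: lborel_prod[symmetric])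

lemma Tr_meas[measurable]: "Tr \<in> borel_measurable borel"
  by (rule borel_measurable_continuous_onI[OF Tr_continuous])

lemma prod_Basis_cart: "(\<Prod>b\<in>(Basis::(real^3) set). f b) = f (axis 1 1) * f (axis 2 1) * f (axis 3 1)"
proof -
  have B: "(Basis::(real^3) set) = (\<lambda>i. axis i 1) ` UNIV"
    by (auto simp: Basis_vec_def)
  have I: "inj (\<lambda>i::3. axis i (1::real))" by (auto simp: inj_on_def axis_eq_axis)
  have "(\<Prod>b\<in>(Basis::(real^3) set). f b) = (\<Prod>i\<in>UNIV. f (axis i 1))"
    by (subst B, subst prod.reindex[OF I]) (simp add: o_def)
  also have "\<dots> = (\<Prod>i\<in>{1,2,3}. f (axis i 1))" by (simp only: UNIV_3)
  also have "\<dots> = f (axis 1 1) * f (axis 2 1) * f (axis 3 1)" by (simp add: ac_simps)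
  finally show ?thesis .
qed

lemma lborel_Tr: "distr lborel borel Tr = (lborel :: (real^3) measure)"
proof (rule lborel_eqI[symmetric])
  fix l u :: "real^3"
  assume le: "\<And>b. b \<in> Basis \<Longrightarrow> l \<bullet> b \<le> u \<bullet> b"
  have le3: "l$i \<le> u$i" for i using le[of "axis i 1"] by (auto simp: Basis_vec_def cart_eq_inner_axis)
  have pre: "Tr -` box l u = {l$1<..<u$1} \<times> {l$2<..<u$2} \<times> {l$3<..<u$3}"
    by (auto simp: mem_box_cart forall_3)
  have "emeasure (distr lborel borel Tr) (box l u) = emeasure lborel (Tr -` box l u)"
    by (simp add: emeasure_distr)
  also have "\<dots> = ennreal (u$1 - l$1) * (ennreal (u$2 - l$2) * ennreal (u$3 - l$3))"
  proof -
    have b: "{l$2<..<u$2} \<times> {l$3<..<u$3} \<in> sets borel" by (simp add: borel_prod[symmetric])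
    show ?thesis unfolding pre using le3
      by (simp add: em_times[OF _ b] em_times)
  qed
  also have "\<dots> = (\<Prod>b\<in>Basis. (u - l) \<bullet> b)"
    using le3 by (simp add: prod_Basis_cart cart_eq_inner_axis[symmetric] ennreal_mult' mult.assoc)
  finally show "emeasure (distr lborel borel Tr) (box l u) = (\<Prod>b\<in>Basis. (u - l) \<bullet> b)" .
qed (rule sets_distr)





definition det3r :: "real \<Rightarrow> real \<Rightarrow> real \<Rightarrow> real \<Rightarrow> real \<Rightarrow> real \<Rightarrow> real \<Rightarrow> real \<Rightarrow> real \<Rightarrow> real" where
  "det3r a11 a12 a13 a21 a22 a23 a31 a32 a33 =
     a11*a22*a33 - a11*a23*a32 - a12*a21*a33 + a12*a23*a31 + a13*a21*a32 - a13*a22*a31"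

lemma det3r_rowop: "det3r a11 a12 a13 a21 a22 a23 a31 a32 a33 =
   det3r (a11+a21) (a12+a22) (a13+a23) (a21-a11) (a22-a12) (a23-a13) a31 a32 a33 / 2"
  unfolding det3r_def by (simp add: field_simps)

lemma det_poly:
  fixes x y S C :: real
  assumes SC: "S^2 + C^2 = 1"
  defines "D \<equiv> y*C + x*S" and "P \<equiv> S - x*C + y*S" and "Q \<equiv> S + x*C - y*S" and "E \<equiv> x*C - y*S"
  shows "det3r (-C*D - P*S) (S*D - P*C) (((C + x*S + y*C)*D - P*E)/2)
               (C*D - Q*S) (-S*D - Q*C) (((C - x*S - y*C)*D - Q*E)/2)
               (2*S*y) (2*C*y - D) (E*y) = D^3"
proof -
  have 1: "(-C*D - P*S) + (C*D - Q*S) = -2*S^2" unfolding P_def Q_def by (simp add: field_simps power2_eq_square)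
  have 2: "(S*D - P*C) + (-S*D - Q*C) = -2*S*C" unfolding P_def Q_def by (simp add: field_simps power2_eq_square)
  have 3: "((C + x*S + y*C)*D - P*E)/2 + ((C - x*S - y*C)*D - Q*E)/2 = y * (S^2 + C^2)"
    unfolding P_def Q_def D_def E_def by (simp add: field_simps power2_eq_square)
  have 4: "(C*D - Q*S) - (-C*D - P*S) = 2*y * (S^2 + C^2)"
    unfolding P_def Q_def D_def E_def by (simp add: field_simps power2_eq_square)
  have 5: "(-S*D - Q*C) - (S*D - P*C) = -2*x * (S^2 + C^2)"
    unfolding P_def Q_def D_def E_def by (simp add: field_simps power2_eq_square)
  have 6: "((C - x*S - y*C)*D - Q*E)/2 - ((C + x*S + y*C)*D - P*E)/2 = -(x^2+y^2) * (S^2 + C^2)"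
    unfolding P_def Q_def D_def E_def by (simp add: field_simps power2_eq_square)
  have 7: "det3r (-2*S^2) (-2*S*C) y (2*y) (-2*x) (-(x^2+y^2)) (2*S*y) (2*C*y - D) (E*y) = 2*D^3 + 2*D*y^2*(1 - S^2 - C^2)"
    unfolding det3r_def D_def E_def by (simp add: field_simps power2_eq_square power3_eq_cube)
  have 8: "det3r (-(2*S^2)) (-(2*S*C)) y (2*y) (-(2*x)) (-(x^2+y^2)) (2*S*y) (2*C*y - D) (E*y) = 2*D^3"
    using 7 SC by simp
  show ?thesis
    apply (subst det3r_rowop)
    apply (subst 1, subst 2, subst 3, subst 4, subst 5, subst 6)
    apply (simp only: SC mult_1_right mult_minus_left)
    apply (subst 8)
    apply simp
    done
qed


definition Dn :: "real^3 \<Rightarrow> real" where "Dn w = w$2 * cos (w$3/2) + w$1 * sin (w$3/2)"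
definition Pn :: "real^3 \<Rightarrow> real" where "Pn w = sin (w$3/2) - w$1 * cos (w$3/2) + w$2 * sin (w$3/2)"
definition Qn :: "real^3 \<Rightarrow> real" where "Qn w = sin (w$3/2) + w$1 * cos (w$3/2) - w$2 * sin (w$3/2)"

definition Phi :: "real^3 \<Rightarrow> real^3" where
  "Phi w = (\<chi> i. if i = 1 then Pn w / Dn w else if i = 2 then Qn w / Dn w else ln ((Dn w)\<^sup>2 / w$2))"

lemma Phi_nth[simp]: "Phi w $ 1 = Pn w / Dn w" "Phi w $ 2 = Qn w / Dn w" "Phi w $ 3 = ln ((Dn w)\<^sup>2 / w$2)"
  by (simp_all add: Phi_def)

definition Jm :: "real^3 \<Rightarrow> real^3^3" where
  "Jm w = (let x = w$1; y = w$2; S = sin (w$3/2); C = cos (w$3/2); D = Dn w; P = Pn w; Q = Qn w;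
            E = x * C - y * S in
     vector [vector [(-C*D - P*S)/D\<^sup>2, (S*D - P*C)/D\<^sup>2, ((C + x*S + y*C)*D - P*E)/(2*D\<^sup>2)],
             vector [(C*D - Q*S)/D\<^sup>2, (-S*D - Q*C)/D\<^sup>2, ((C - x*S - y*C)*D - Q*E)/(2*D\<^sup>2)],
             vector [2*S/D, 2*C/D - 1/y, E/D]])"


lemma det3r_scale:
  assumes "k \<noteq> 0" "m \<noteq> 0"
  shows "det3r (a11/k) (a12/k) (a13/k) (a21/k) (a22/k) (a23/k) (a31/m) (a32/m) (a33/m) =
         det3r a11 a12 a13 a21 a22 a23 a31 a32 a33 / (k*k*m)"
  unfolding det3r_def using assms by (simp add: field_simps)

lemma det_Jm:
  assumes "w$2 > 0" "Dn w \<noteq> 0"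
  shows "det (Jm w) = 1 / (w$2 * (Dn w)\<^sup>2)"
proof -
  define x where "x = w$1"
  define y where "y = w$2"
  define S where "S = sin (w$3/2)"
  define C where "C = cos (w$3/2)"
  define D where "D = y*C + x*S"
  define P where "P = S - x*C + y*S"
  define Q where "Q = S + x*C - y*S"
  define E where "E = x*C - y*S"
  have SC: "S\<^sup>2 + C\<^sup>2 = 1" by (simp add: S_def C_def)
  have DD: "Dn w = D" by (simp add: Dn_def x_def y_def S_def C_def D_def)
  have PP: "Pn w = P" by (simp add: Pn_def x_def y_def S_def C_def P_def)
  have QQ: "Qn w = Q" by (simp add: Qn_def x_def y_def S_def C_def Q_def)
  have y0: "y > 0" using assms by (simp add: y_def)
  have D0: "D \<noteq> 0" using assms DD by simp
  have "det (Jm w) = det3r ((-C*D - P*S)/D\<^sup>2) ((S*D - P*C)/D\<^sup>2) (((C + x*S + y*C)*D - P*E)/(2*D\<^sup>2))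
             ((C*D - Q*S)/D\<^sup>2) ((-S*D - Q*C)/D\<^sup>2) (((C - x*S - y*C)*D - Q*E)/(2*D\<^sup>2))
             (2*S/D) (2*C/D - 1/y) (E/D)"
    unfolding Jm_def Let_def det_3 det3r_def DD PP QQ x_def[symmetric] y_def[symmetric] S_def[symmetric] C_def[symmetric] E_def[symmetric]
    by simp
  also have "\<dots> = det3r ((-C*D - P*S)/D\<^sup>2) ((S*D - P*C)/D\<^sup>2) ((((C + x*S + y*C)*D - P*E)/2)/D\<^sup>2)
             ((C*D - Q*S)/D\<^sup>2) ((-S*D - Q*C)/D\<^sup>2) ((((C - x*S - y*C)*D - Q*E)/2)/D\<^sup>2)
             ((2*S*y)/(y*D)) ((2*C*y - D)/(y*D)) ((E*y)/(y*D))"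
    using y0 D0 by (simp add: field_simps)
  also have "\<dots> = det3r (-C*D - P*S) (S*D - P*C) (((C + x*S + y*C)*D - P*E)/2)
               (C*D - Q*S) (-S*D - Q*C) (((C - x*S - y*C)*D - Q*E)/2)
               (2*S*y) (2*C*y - D) (E*y) / (D\<^sup>2 * D\<^sup>2 * (y*D))"
    by (rule det3r_scale) (use y0 D0 in simp_all)
  also have "\<dots> = D^3 / (D\<^sup>2 * D\<^sup>2 * (y*D))"
    unfolding D_def P_def Q_def E_def by (simp only: det_poly[OF SC])
  also have "\<dots> = 1 / (y * D\<^sup>2)"
    using y0 D0 by (simp add: field_simps power2_eq_square power3_eq_cube)
  finally show ?thesis by (simp add: DD y_def)
qed


lemma hd_nth[derivative_intros]: "((\<lambda>x::real^'n. x $ i) has_derivative (\<lambda>h. h $ i)) F"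
  by (rule bounded_linear_imp_has_derivative) (rule bounded_linear_vec_nth)

lemma mv3: "((A::real^3^3) *v h) $ i = A$i$1 * h$1 + A$i$2 * h$2 + A$i$3 * h$3"
  by (simp add: matrix_vector_mult_def sum_3)

definition Dd :: "real^3 \<Rightarrow> real^3 \<Rightarrow> real" where
  "Dd w h = sin (w$3/2) * h$1 + cos (w$3/2) * h$2 + (w$1 * cos (w$3/2) - w$2 * sin (w$3/2))/2 * h$3"
definition Pd :: "real^3 \<Rightarrow> real^3 \<Rightarrow> real" where
  "Pd w h = - cos (w$3/2) * h$1 + sin (w$3/2) * h$2 + (cos (w$3/2) + w$1 * sin (w$3/2) + w$2 * cos (w$3/2))/2 * h$3"
definition Qd :: "real^3 \<Rightarrow> real^3 \<Rightarrow> real" where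
  "Qd w h = cos (w$3/2) * h$1 - sin (w$3/2) * h$2 + (cos (w$3/2) - w$1 * sin (w$3/2) - w$2 * cos (w$3/2))/2 * h$3"

lemma Dn_deriv: "(Dn has_derivative Dd w) (at w)"
  unfolding Dn_def[abs_def] Dd_def[abs_def]
  by (auto intro!: derivative_eq_intros simp: field_simps)

lemma Pn_deriv: "(Pn has_derivative Pd w) (at w)"
  unfolding Pn_def[abs_def] Pd_def[abs_def]
  by (auto intro!: derivative_eq_intros simp: field_simps)

lemma Qn_deriv: "(Qn has_derivative Qd w) (at w)"
  unfolding Qn_def[abs_def] Qd_def[abs_def]
  by (auto intro!: derivative_eq_intros simp: field_simps)


lemma deriv1:
  assumes "Dn w \<noteq> 0"
  shows "((\<lambda>v. Pn v / Dn v) has_derivative (\<lambda>h. (Jm w *v h) $ 1)) (at w)"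
  apply (rule has_derivative_eq_rhs[OF has_derivative_divide'[OF Pn_deriv Dn_deriv assms]])
  apply (rule ext)
  unfolding mv3 Jm_def Let_def Dd_def Pd_def
  using assms by (simp add: field_simps power2_eq_square)


lemma deriv2:
  assumes "Dn w \<noteq> 0"
  shows "((\<lambda>v. Qn v / Dn v) has_derivative (\<lambda>h. (Jm w *v h) $ 2)) (at w)"
  apply (rule has_derivative_eq_rhs[OF has_derivative_divide'[OF Qn_deriv Dn_deriv assms]])
  apply (rule ext)
  unfolding mv3 Jm_def Let_def Dd_def Qd_def
  using assms by (simp add: field_simps power2_eq_square)


lemma deriv3:
  assumes "w$2 > 0" "Dn w \<noteq> 0"
  shows "((\<lambda>v. ln ((Dn v)\<^sup>2 / v$2)) has_derivative (\<lambda>h. (Jm w *v h) $ 3)) (at w)"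
proof -
  have i: "((\<lambda>v. (Dn v)\<^sup>2) has_derivative (\<lambda>h. 2 * Dn w * Dd w h)) (at w)"
    unfolding power2_eq_square
    by (rule has_derivative_eq_rhs[OF has_derivative_mult[OF Dn_deriv Dn_deriv]]) (simp add: fun_eq_iff)
  have q: "((\<lambda>v. (Dn v)\<^sup>2 / v$2) has_derivative
      (\<lambda>h. (2 * Dn w * Dd w h * w$2 - (Dn w)\<^sup>2 * h$2) / (w$2 * w$2))) (at w)"
    using has_derivative_divide'[OF i hd_nth, of 2] assms by simp
  have pos: "0 < (Dn w)\<^sup>2 / w$2" using assms by simp
  have l: "DERIV ln ((Dn w)\<^sup>2 / w$2) :> inverse ((Dn w)\<^sup>2 / w$2)"
    by (rule DERIV_ln[OF pos])
  show ?thesis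
    apply (rule has_derivative_eq_rhs[OF DERIV_compose_FDERIV[OF l q]])
    apply (rule ext)
    unfolding mv3 Jm_def Let_def Dd_def
    using assms by (simp add: field_simps power2_eq_square)
qed


lemma has_derivative_vec3:
  fixes f :: "real^3 \<Rightarrow> real^3"
  assumes "((\<lambda>x. f x $ 1) has_derivative (\<lambda>h. f' h $ 1)) (at a within S)"
    and "((\<lambda>x. f x $ 2) has_derivative (\<lambda>h. f' h $ 2)) (at a within S)"
    and "((\<lambda>x. f x $ 3) has_derivative (\<lambda>h. f' h $ 3)) (at a within S)"
  shows "(f has_derivative f') (at a within S)"
proof (subst has_derivative_componentwise_within, intro ballI)
  fix b :: "real^3" assume "b \<in> Basis"
  then obtain i where b: "b = axis i 1" by (auto simp: Basis_vec_def)
  have "((\<lambda>x. f x $ i) has_derivative (\<lambda>h. f' h $ i)) (at a within S)"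
    using assms exhaust_3[of i] by auto
  then show "((\<lambda>x. f x \<bullet> b) has_derivative (\<lambda>x. f' x \<bullet> b)) (at a within S)"
    by (simp add: b cart_eq_inner_axis[symmetric])
qed

lemma Phi_deriv:
  assumes "w$2 > 0" "Dn w \<noteq> 0"
  shows "(Phi has_derivative (\<lambda>h. Jm w *v h)) (at w within T)"
  apply (rule has_derivative_vec3)
  using has_derivative_at_withinI[OF deriv1[OF assms(2)]] has_derivative_at_withinI[OF deriv2[OF assms(2)]]
    has_derivative_at_withinI[OF deriv3[OF assms]]
  by simp_all




lemma iw_entries:
  assumes "y > 0"
  shows "iwasawa x y t = ((y* cos t + x* sin t)/sqrt y, (x* cos t - y* sin t)/sqrt y, sin t/sqrt y, cos t/sqrt y)"
proof -
  have s: "sqrt y * sqrt y = y" using assms by simp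
  have s0: "sqrt y > 0" using assms by simp
  have 1: "sqrt y * cos t + x * sin t / sqrt y = (y* cos t + x* sin t)/sqrt y"
    using s s0 by (simp add: field_simps)
  have 2: "- sqrt y * sin t + x * cos t / sqrt y = (x* cos t - y* sin t)/sqrt y"
    using s s0 by (simp add: field_simps)
  show ?thesis unfolding iwasawa_def 1 2 ..
qed

lemma iw_det:
  assumes "y > 0" "iwasawa x y t = (a,b,c,d)"
  shows "a*d - b*c = 1"
proof -
  have s: "sqrt y * sqrt y = y" using assms by simp
  have s0: "sqrt y > 0" using assms by simp
  have a: "a = (y * cos t + x * sin t)/sqrt y" and b: "b = (x * cos t - y * sin t)/sqrt y"
    and c: "c = sin t / sqrt y" and d: "d = cos t / sqrt y"
    using assms(2) unfolding iw_entries[OF assms(1)] by auto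
  have "a*d - b*c = ((y* cos t + x* sin t)* cos t - (x* cos t - y* sin t)* sin t) / (sqrt y * sqrt y)"
    using s0 unfolding a b c d by (simp add: field_simps)
  also have "\<dots> = y * ((sin t)\<^sup>2 + (cos t)\<^sup>2) / y" unfolding s by (rule arg_cong[where f="\<lambda>z. z / y"]) algebra
  also have "\<dots> = 1" using assms by simp
  finally show ?thesis .
qed

lemma iw_cd:
  assumes "y > 0" "iwasawa x y t = (a,b,c,d)"
  shows "c\<^sup>2 + d\<^sup>2 = 1/y" "sin t = sqrt y * c" "cos t = sqrt y * d"
proof -
  have s0: "sqrt y > 0" using assms by simp
  have c: "c = sin t / sqrt y" and d: "d = cos t / sqrt y"
    using assms(2) unfolding iw_entries[OF assms(1)] by auto
  show "c\<^sup>2 + d\<^sup>2 = 1/y" using assms(1) unfolding c d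
    by (simp add: power_divide add_divide_distrib[symmetric])
  show "sin t = sqrt y * c" "cos t = sqrt y * d" using s0 unfolding c d by auto
qed

lemma iw_x:
  assumes "y > 0" "iwasawa x y t = (a,b,c,d)"
  shows "x = sqrt y * (a * sin t + b * cos t)"
proof -
  have s: "sqrt y * sqrt y = y" using assms by simp
  have s0: "sqrt y > 0" using assms by simp
  have a: "a = (y * cos t + x * sin t)/sqrt y" and b: "b = (x * cos t - y * sin t)/sqrt y"
    using assms(2) unfolding iw_entries[OF assms(1)] by auto
  have "sqrt y * (a * sin t + b * cos t) = ((y* cos t + x* sin t)* sin t + (x* cos t - y* sin t)* cos t)"
    using s0 unfolding a b by (simp add: field_simps)
  also have "\<dots> = x * ((sin t)\<^sup>2 + (cos t)\<^sup>2)" by algebra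
  finally show ?thesis by simp
qed

lemma Phi_G:
  assumes "w$2 > 0" "Dn w \<noteq> 0" "iwasawa (w$1) (w$2) (w$3/2) = (a,b,c,d)"
  shows "a \<noteq> 0" "Phi w = vector [(c-b)/a, (c+b)/a, ln (a\<^sup>2)]"
proof -
  have s: "sqrt (w$2) * sqrt (w$2) = w$2" "(sqrt (w$2))\<^sup>2 = w$2" using assms by simp_all
  have s0: "sqrt (w$2) > 0" using assms by simp
  have a: "a = Dn w / sqrt (w$2)" and b: "b = (w$1 * cos (w$3/2) - w$2 * sin (w$3/2)) / sqrt (w$2)"
    and c: "c = sin (w$3/2) / sqrt (w$2)"
    using assms(3) unfolding iw_entries[OF assms(1)] Dn_def by (auto simp: algebra_simps)
  have cb: "c - b = Pn w / sqrt (w$2)"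
    unfolding b c Pn_def diff_divide_distrib[symmetric] by (simp add: algebra_simps)
  have cb2: "c + b = Qn w / sqrt (w$2)"
    unfolding b c Qn_def add_divide_distrib[symmetric] by (simp add: algebra_simps)
  show "a \<noteq> 0" using a assms s0 by simp
  have 1: "(c-b)/a = Pn w / Dn w" unfolding cb a using s0 by simp
  have 2: "(c+b)/a = Qn w / Dn w" unfolding cb2 a using s0 by simp
  have 3: "a\<^sup>2 = (Dn w)\<^sup>2 / w$2" unfolding a by (simp add: power_divide s)
  show "Phi w = vector [(c-b)/a, (c+b)/a, ln (a\<^sup>2)]"
    unfolding 1 2 3 by (simp add: vec_eq_iff forall_3)
qed


lemma G_unique:
  assumes y: "y > 0" "y' > 0" and t: "0 \<le> t" "t < pi" "0 \<le> t'" "t' < pi"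
    and G: "iwasawa x y t = (a,b,c,d)" "iwasawa x' y' t' = (a',b',c',d')"
    and eq: "(a' = a \<and> b' = b \<and> c' = c \<and> d' = d) \<or> (a' = -a \<and> b' = -b \<and> c' = -c \<and> d' = -d)"
  shows "x = x' \<and> y = y' \<and> t = t'"
proof -
  have "c'\<^sup>2 + d'\<^sup>2 = c\<^sup>2 + d\<^sup>2" using eq by auto
  then have "1/y' = 1/y" using iw_cd(1)[OF y(1) G(1)] iw_cd(1)[OF y(2) G(2)] by simp
  then have yy: "y' = y" using y by (simp add: field_simps)
  note cd1 = iw_cd(2,3)[OF y(1) G(1)] and cd2 = iw_cd(2,3)[OF y(2) G(2), unfolded yy]
  have pi0: "pi > 0" by (rule pi_gt_zero)
  from eq show ?thesis
  proof
    assume e: "a' = a \<and> b' = b \<and> c' = c \<and> d' = d"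
    then have ct: "cos t = cos t'" using cd1 cd2 by simp
    have tt: "t = t'"
      by (rule cos_inj_pi) (use t ct in linarith)+
    have x1: "x = sqrt y * (a * sin t + b * cos t)" by (rule iw_x[OF y(1) G(1)])
    have x2: "x' = sqrt y' * (a' * sin t' + b' * cos t')" by (rule iw_x[OF y(2) G(2)])
    have "x = x'" unfolding x1 x2 using e tt yy by simp
    then show ?thesis using tt yy by simp
  next
    assume e: "a' = -a \<and> b' = -b \<and> c' = -c \<and> d' = -d"
    then have st: "sin t' = - sin t" using cd1 cd2 by simp
    have s1: "sin t \<ge> 0" by (rule sin_ge_zero) (use t in linarith)+
    have s2: "sin t' \<ge> 0" by (rule sin_ge_zero) (use t in linarith)+
    have z1: "sin t = 0" using st s1 s2 by linarith
    have z2: "sin t' = 0" using st s1 s2 by linarith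
    have t0: "t = 0" by (rule sin_eq_0_pi) (use t pi0 z1 in linarith)+
    have t0': "t' = 0" by (rule sin_eq_0_pi) (use t pi0 z2 in linarith)+
    have "cos t' = - cos t" using e cd1 cd2 by simp
    then show ?thesis using t0 t0' by simp
  qed
qed

definition S0 :: "(real^3) set" where
  "S0 = {w. 0 < w$2 \<and> 0 \<le> w$3 \<and> w$3 < 2*pi \<and> Dn w \<noteq> 0}"

lemma Phi_inj: "inj_on Phi S0"
proof (rule inj_onI)
  fix w w' assume w: "w \<in> S0" and w': "w' \<in> S0" and eq: "Phi w = Phi w'"
  obtain a b c d where G: "iwasawa (w$1) (w$2) (w$3/2) = (a,b,c,d)" by (metis prod_cases4)
  obtain a' b' c' d' where G': "iwasawa (w'$1) (w'$2) (w'$3/2) = (a',b',c',d')" by (metis prod_cases4)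
  have y: "w$2 > 0" "w'$2 > 0" and D: "Dn w \<noteq> 0" "Dn w' \<noteq> 0" using w w' by (auto simp: S0_def)
  note P1 = Phi_G[OF y(1) D(1) G] and P2 = Phi_G[OF y(2) D(2) G']
  have det1: "a*d - b*c = 1" by (rule iw_det[OF y(1) G])
  have det2: "a'*d' - b'*c' = 1" by (rule iw_det[OF y(2) G'])
  have e: "(c-b)/a = (c'-b')/a'" "(c+b)/a = (c'+b')/a'" "ln (a\<^sup>2) = ln (a'\<^sup>2)"
    using eq unfolding P1(2) P2(2) by (simp_all add: vec_eq_iff forall_3)
  have "a\<^sup>2 = a'\<^sup>2" using e(3) P1(1) P2(1) by simp
  then have "a' = a \<or> a' = -a" by (auto simp: power2_eq_iff)
  then have "(a' = a \<and> b' = b \<and> c' = c \<and> d' = d) \<or> (a' = -a \<and> b' = -b \<and> c' = -c \<and> d' = -d)"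
  proof
    assume aa: "a' = a"
    have m1: "(c-b)/a * a = (c'-b')/a * a" and m2: "(c+b)/a * a = (c'+b')/a * a" using e(1,2) aa by metis+
    have "c' - b' = c - b" "c' + b' = c + b" using m1 m2 P1(1) by auto
    then have bc: "b' = b" "c' = c" by linarith+
    have "a * d' = a * d" using det1 det2 unfolding aa bc by linarith
    then have "d' = d" using P1(1) by simp
    then show ?thesis using aa bc by simp
  next
    assume aa: "a' = -a"
    have m1: "(c-b)/a * a = (c'-b')/(-a) * a" and m2: "(c+b)/a * a = (c'+b')/(-a) * a" using e(1,2) aa by metis+
    have "c' - b' = -(c - b)" "c' + b' = -(c + b)" using m1 m2 P1(1) by auto
    then have bc: "b' = -b" "c' = -c" by linarith+
    have "a * d' = a * (-d)" using det1 det2 unfolding aa bc by (simp add: algebra_simps)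
    then have "d' = -d" using P1(1) mult_left_cancel by metis
    then show ?thesis using aa bc by simp
  qed
  from G_unique[OF y _ _ _ _ G G' this] w w'
  have "w$1 = w'$1" "w$2 = w'$2" "w$3/2 = w'$3/2" by (auto simp: S0_def)
  then show "w = w'" by (auto simp: vec_eq_iff forall_3)
qed


lemma Phi_surj: "\<exists>w\<in>S0. Phi w = u"
proof -
  define a0 where "a0 = exp (u$3/2)"
  define b0 where "b0 = a0*(u$2 - u$1)/2"
  define c0 where "c0 = a0*(u$1 + u$2)/2"
  define d0 where "d0 = (1 + b0*c0)/a0"
  have a0: "a0 > 0" by (simp add: a0_def)
  have det0: "a0*d0 - b0*c0 = 1" using a0 by (simp add: d0_def field_simps)
  have "c0 \<noteq> 0 \<or> d0 \<noteq> 0" using det0 by auto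
  then have r: "c0\<^sup>2 + d0\<^sup>2 > 0" by (metis sum_power2_gt_zero_iff)
  define y where "y = 1/(c0\<^sup>2 + d0\<^sup>2)"
  define s where "s = sqrt y"
  have y0: "y > 0" using r by (simp add: y_def)
  have s0: "s > 0" using y0 by (simp add: s_def)
  have ss: "s\<^sup>2 = y" using y0 by (simp add: s_def)
  have rn: "c0\<^sup>2 + d0\<^sup>2 \<noteq> 0" using r by linarith
  have hy0: "y*(c0\<^sup>2 + d0\<^sup>2) = 1" unfolding y_def using rn by (simp only: divide_inverse mult_1_left left_inverse not_False_eq_True)
  have unit: "(s*d0)\<^sup>2 + (s*c0)\<^sup>2 = 1"
  proof -
    have "(s*d0)\<^sup>2 + (s*c0)\<^sup>2 = s\<^sup>2 * (c0\<^sup>2 + d0\<^sup>2)" by (simp add: power_mult_distrib algebra_simps)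
    then show ?thesis using hy0 ss by simp
  qed
  obtain t0 where t0: "0 \<le> t0" "t0 < 2*pi" "s*d0 = cos t0" "s*c0 = sin t0"
    using sincos_total_2pi[OF unit] by metis
  obtain th a b c d where th: "0 \<le> th" "th < pi" "cos th = s*d" "sin th = s*c"
    and sg: "(a = a0 \<and> b = b0 \<and> c = c0 \<and> d = d0) \<or> (a = -a0 \<and> b = -b0 \<and> c = -c0 \<and> d = -d0)"
  proof (cases "t0 < pi")
    case True
    then show ?thesis using that[of t0 d0 c0 a0 b0] t0 by simp
  next
    case False
    have "cos (t0 - pi) = s*(-d0)" "sin (t0 - pi) = s*(-c0)" using t0 by (simp_all add: cos_diff sin_diff)
    then show ?thesis using that[of "t0 - pi" "-d0" "-c0" "-a0" "-b0"] t0 False by simp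
  qed
  have det: "a*d - b*c = 1" using sg det0 by auto
  have hy: "y*(c\<^sup>2 + d\<^sup>2) = 1" using sg hy0 by auto
  have an: "a \<noteq> 0" using sg a0 by auto
  define x where "x = y*(a*c + b*d)"
  define w where "w = (vector [x, y, 2*th] :: real^3)"
  have w1: "w$1 = x" and w2: "w$2 = y" and w3: "w$3/2 = th" by (simp_all add: w_def)
  have ea: "y*d + x*c = a"
  proof -
    have "y*d + x*c = a*(y*(c\<^sup>2+d\<^sup>2)) + y*d*(1 + b*c - a*d)" unfolding x_def by algebra
    then show ?thesis using det hy by simp
  qed
  have eb: "x*d - y*c = b"
  proof -
    have "x*d - y*c = b*(y*(c\<^sup>2+d\<^sup>2)) + y*c*(a*d - b*c - 1)" unfolding x_def by algebra
    then show ?thesis using det hy by simp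
  qed
  have sy: "sqrt y = s" by (simp add: s_def)
  have iw: "iwasawa x y th = (a,b,c,d)"
  proof -
    have A: "y * cos th + x * sin th = s * a" unfolding th ea[symmetric] by (simp add: algebra_simps)
    have B: "x * cos th - y * sin th = s * b" unfolding th eb[symmetric] by (simp add: algebra_simps)
    have "(y * cos th + x * sin th)/sqrt y = a" unfolding sy A using s0 by simp
    moreover have "(x * cos th - y * sin th)/sqrt y = b" unfolding sy B using s0 by simp
    moreover have "sin th / sqrt y = c" "cos th / sqrt y = d" unfolding sy th using s0 by simp_all
    ultimately show ?thesis unfolding iw_entries[OF y0] by simp
  qed
  have Dw: "Dn w = s * a"
  proof -
    have "Dn w = y * cos th + x * sin th" unfolding Dn_def w1 w2 w3 ..
    also have "\<dots> = s * (y*d + x*c)" unfolding th by (simp add: algebra_simps)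
    finally show ?thesis using ea by simp
  qed
  have iw': "iwasawa (w$1) (w$2) (w$3/2) = (a,b,c,d)" unfolding w1 w2 w3 by (rule iw)
  have Dn0: "Dn w \<noteq> 0" using Dw s0 an by simp
  have w3': "w$3 = 2*th" by (simp add: w_def)
  have wS: "w \<in> S0" unfolding S0_def using y0 th Dn0 by (simp add: w2 w3')
  have P: "Phi w = vector [(c-b)/a, (c+b)/a, ln (a\<^sup>2)]" by (rule Phi_G(2)[OF _ Dn0 iw']) (simp add: w2 y0)
  have q1a: "(c-b)/a = (c0-b0)/a0 \<and> (c+b)/a = (c0+b0)/a0 \<and> a\<^sup>2 = a0\<^sup>2"
    using sg
  proof
    assume h: "a = a0 \<and> b = b0 \<and> c = c0 \<and> d = d0"
    then show ?thesis by simp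
  next
    assume h: "a = -a0 \<and> b = -b0 \<and> c = -c0 \<and> d = -d0"
    then have h1: "c - b = -(c0-b0)" "c + b = -(c0+b0)" "a = -a0" by simp_all
    show ?thesis unfolding h1 by (simp only: minus_divide_divide power2_minus simp_thms)
  qed
  then have q1: "(c-b)/a = (c0-b0)/a0" "(c+b)/a = (c0+b0)/a0" "a\<^sup>2 = a0\<^sup>2" by blast+
  have r1: "(c0-b0)/a0 = u$1" "(c0+b0)/a0 = u$2" using a0 by (simp_all add: b0_def c0_def field_simps)
  have r3: "ln (a0\<^sup>2) = u$3"
  proof -
    have "a0\<^sup>2 = exp (u$3)" unfolding a0_def by (simp add: power2_eq_square exp_add[symmetric])
    then show ?thesis by simp
  qed
  have "Phi w = u" unfolding P q1 r1 r3 by (simp add: vec_eq_iff forall_3)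
  then show ?thesis using wS by blast
qed




lemma cov_real:
  fixes f :: "real^3 \<Rightarrow> real" and g :: "real^3 \<Rightarrow> real^3"
  assumes S: "S \<in> sets lebesgue"
    and der: "\<And>x. x \<in> S \<Longrightarrow> (g has_derivative g' x) (at x within S)"
    and inj: "inj_on g S"
    and fi: "f absolutely_integrable_on (g ` S)" and fb: "integral (g ` S) f = b"
  shows "(\<lambda>x. \<bar>det (matrix (g' x))\<bar> * f (g x)) absolutely_integrable_on S \<and>
         integral S (\<lambda>x. \<bar>det (matrix (g' x))\<bar> * f (g x)) = b"
proof -
  have "(\<lambda>x. \<bar>det (matrix (g' x))\<bar> *\<^sub>R (vec (f (g x)) :: real^1)) absolutely_integrable_on S \<and>
        integral S (\<lambda>x. \<bar>det (matrix (g' x))\<bar> *\<^sub>R (vec (f (g x)) :: real^1)) = vec b"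
    using has_absolute_integral_change_of_variables[OF S der inj, of "\<lambda>x. vec (f x) :: real^1" "vec b"] fi fb
    unfolding absolutely_integrable_on_1_iff integral_on_1_eq by simp
  then show ?thesis
    unfolding absolutely_integrable_on_1_iff integral_on_1_eq by (simp add: vec_eq_iff)
qed

lemma Dn_cont: "continuous_on UNIV Dn"
  by (rule continuous_at_imp_continuous_on) (use has_derivative_continuous[OF Dn_deriv] in auto)

lemma nth_cont: "continuous_on UNIV (\<lambda>w::real^3. w $ i)"
  by (rule linear_continuous_on[OF bounded_linear_vec_nth])

definition U0 :: "(real^3) set" where "U0 = {w. 0 < w$2 \<and> Dn w \<noteq> 0}"

lemma U0_open: "open U0"
proof -
  have "U0 = (UNIV \<inter> (\<lambda>w::real^3. w $ 2) -` {0<..}) \<inter> (UNIV \<inter> Dn -` (-{0}))"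
    by (auto simp: U0_def)
  moreover have "open (UNIV \<inter> (\<lambda>w::real^3. w $ 2) -` {0<..})"
    by (rule continuous_open_preimage[OF nth_cont]) auto
  moreover have "open (UNIV \<inter> Dn -` (-{0}))"
    by (rule continuous_open_preimage[OF Dn_cont]) auto
  ultimately show ?thesis by (metis open_Int)
qed

lemma Phi_cont: "continuous_on U0 Phi"
proof (rule continuous_at_imp_continuous_on, intro ballI)
  fix w assume "w \<in> U0"
  then have "(Phi has_derivative (\<lambda>h. Jm w *v h)) (at w within UNIV)"
    by (intro Phi_deriv) (auto simp: U0_def)
  then show "isCont Phi w" using has_derivative_continuous by auto
qed

lemma Sp_borel:
  assumes "closed K"
  shows "{w \<in> S0. Phi w \<in> K} \<in> sets borel"
proof -
  have m3: "(\<lambda>w::real^3. w $ 3) \<in> borel_measurable borel"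
    by (rule borel_measurable_continuous_onI[OF nth_cont])
  have strip: "{w::real^3. 0 \<le> w$3 \<and> w$3 < 2*pi} \<in> sets borel"
  proof -
    have "{w::real^3. 0 \<le> w$3 \<and> w$3 < 2*pi} = (\<lambda>w::real^3. w $ 3) -` {0..<2*pi} \<inter> space borel" by auto
    then show ?thesis using measurable_sets[OF m3, of "{0..<2*pi}"] by simp
  qed
  have o: "open (U0 \<inter> Phi -` (-K))"
    by (rule continuous_open_preimage[OF Phi_cont U0_open]) (use assms in auto)
  have "{w \<in> S0. Phi w \<in> K} = {w::real^3. 0 \<le> w$3 \<and> w$3 < 2*pi} \<inter> (U0 - (U0 \<inter> Phi -` (-K)))"
    by (auto simp: S0_def U0_def)
  also have "\<dots> \<in> sets borel"
  proof (rule sets.Int[OF strip], rule sets.Diff)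
    show "U0 \<in> sets borel" using U0_open by (rule borel_open)
    show "U0 \<inter> Phi -` (-K) \<in> sets borel" using o by (rule borel_open)
  qed
  finally show ?thesis .
qed

lemma main3:
  assumes K: "compact K"
  shows "(\<integral>\<^sup>+ w. ennreal (1/(w$2)\<^sup>2) * indicator {w \<in> S0. Phi w \<in> K} w \<partial>lborel) =
         (\<integral>\<^sup>+ w. ennreal (exp (w$3)) * indicator K w \<partial>lborel)"
proof -
  define S' where "S' = {w \<in> S0. Phi w \<in> K}"
  have img: "Phi ` S' = K"
  proof
    show "Phi ` S' \<subseteq> K" by (auto simp: S'_def)
    show "K \<subseteq> Phi ` S'"
    proof
      fix u assume "u \<in> K"
      obtain w where "w \<in> S0" "Phi w = u" using Phi_surj by blast
      then show "u \<in> Phi ` S'" using \<open>u \<in> K\<close> unfolding S'_def by blast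
    qed
  qed
  have inj: "inj_on Phi S'" by (rule inj_on_subset[OF Phi_inj]) (auto simp: S'_def)
  have der: "(Phi has_derivative (\<lambda>h. Jm x *v h)) (at x within S')" if "x \<in> S'" for x
    using that by (intro Phi_deriv) (auto simp: S'_def S0_def)
  have Sb: "S' \<in> sets borel" unfolding S'_def by (rule Sp_borel[OF compact_imp_closed[OF K]])
  then have Sl: "S' \<in> sets lebesgue" by simp
  have "K \<in> sets borel" using compact_imp_closed[OF K] by (rule borel_closed)
  then have Kl: "K \<in> sets lebesgue" by simp
  obtain a b where Kab: "K \<subseteq> cbox a b" using compact_imp_bounded[OF K] bounded_subset_cbox_symmetric by metis
  have "(\<lambda>u::real^3. exp (u$3)) absolutely_integrable_on cbox a b"
    by (rule absolutely_integrable_continuous) (intro continuous_intros nth_cont[THEN continuous_on_subset]; simp)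
  then have fi: "(\<lambda>u::real^3. exp (u$3)) absolutely_integrable_on K"
    by (rule set_integrable_subset[OF _ Kl Kab])
  define I where "I = integral K (\<lambda>u::real^3. exp (u$3))"
  have cv: "(\<lambda>x. \<bar>det (matrix (\<lambda>h. Jm x *v h))\<bar> * exp (Phi x $ 3)) absolutely_integrable_on S' \<and>
        integral S' (\<lambda>x. \<bar>det (matrix (\<lambda>h. Jm x *v h))\<bar> * exp (Phi x $ 3)) = I"
    using cov_real[OF Sl der inj, of "\<lambda>u. exp (u$3)" I] unfolding img using fi I_def by blast
  have pt: "\<bar>det (matrix (\<lambda>h. Jm x *v h))\<bar> * exp (Phi x $ 3) = 1/(x$2)\<^sup>2" if "x \<in> S'" for x
  proof -
    have y: "x$2 > 0" and D: "Dn x \<noteq> 0" using that by (auto simp: S'_def S0_def)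
    have "exp (Phi x $ 3) = (Dn x)\<^sup>2 / x$2" using y D by simp
    then show ?thesis using y D by (simp add: det_Jm power2_eq_square)
  qed
  define f where "f = (\<lambda>x. \<bar>det (matrix (\<lambda>h. Jm x *v h))\<bar> * exp (Phi x $ 3))"
  have "f integrable_on S'" using cv unfolding f_def absolutely_integrable_on_def by blast
  then have "(f has_integral integral S' f) S'" by (rule integrable_integral)
  then have fS: "(f has_integral I) S'" using cv unfolding f_def by simp
  have hS: "((\<lambda>x::real^3. 1/(x$2)\<^sup>2) has_integral I) S'"
    using fS has_integral_cong[of S' f "\<lambda>x::real^3. 1/(x$2)\<^sup>2" I] pt unfolding f_def by blast
  have "(\<lambda>u::real^3. exp (u$3)) integrable_on K" using fi unfolding absolutely_integrable_on_def by blast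
  then have hK: "((\<lambda>u::real^3. exp (u$3)) has_integral I) K" unfolding I_def by (rule integrable_integral)
  have "(\<integral>\<^sup>+ w. ennreal (1/(w$2)\<^sup>2) * indicator S' w \<partial>lborel) = ennreal I"
    by (rule nn_integral_has_integral_lebesgue'[OF _ hS]) simp
  moreover have "(\<integral>\<^sup>+ w. ennreal (exp (w$3)) * indicator K w \<partial>lborel) = ennreal I"
    by (rule nn_integral_has_integral_lebesgue'[OF _ hK]) simp
  ultimately show ?thesis unfolding S'_def by simp
qed




lemma vec_Tr: "vector [p, q, r] = Tr (p, q, r)"
  by (simp add: vec_eq_iff forall_3)

lemma char:
  assumes y: "0 < y"
  shows "(iwasawa x y (\<phi>/2) \<in> calB X \<or> mat_neg (iwasawa x y (\<phi>/2)) \<in> calB X) \<longleftrightarrow>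
         (Dn (Tr (x,y,\<phi>)) \<noteq> 0 \<and> Phi (Tr (x,y,\<phi>)) \<in> Tr ` X)"
proof -
  define w where "w = Tr (x,y,\<phi>)"
  have w1: "w$1 = x" and w2: "w$2 = y" and w3: "w$3/2 = \<phi>/2" by (simp_all add: w_def)
  obtain a b c d where G: "iwasawa x y (\<phi>/2) = (a,b,c,d)" by (metis prod_cases4)
  have det: "a*d - b*c = 1" by (rule iw_det[OF y G])
  have s0: "sqrt y > 0" using y by simp
  have Dw: "Dn w = sqrt y * a"
  proof -
    have "a = (y * cos (\<phi>/2) + x * sin (\<phi>/2)) / sqrt y" using G unfolding iw_entries[OF y] by simp
    moreover have "Dn w = y * cos (\<phi>/2) + x * sin (\<phi>/2)" unfolding Dn_def w1 w2 w3 ..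
    ultimately show ?thesis using s0 by simp
  qed
  have Tinj: "Tr q \<in> Tr ` X \<longleftrightarrow> q \<in> X" for q by (metis Tr_inj imageE imageI)
  have memB: "(a', b', c', d') \<in> calB X \<longleftrightarrow> 0 < a' \<and> a'*d' - b'*c' = 1 \<and> F_map a' b' c' \<in> X" for a' b' c' d'
    by (simp add: calB_def)
  show ?thesis
  proof (cases "a = 0")
    case True
    then show ?thesis unfolding w_def[symmetric] Dw G mat_neg_def memB by (simp add: calB_def)
  next
    case False
    have G': "iwasawa (w$1) (w$2) (w$3/2) = (a,b,c,d)" unfolding w1 w2 w3 by (rule G)
    have D0: "Dn w \<noteq> 0" using Dw s0 False by simp
    have P: "Phi w = Tr ((c-b)/a, (c+b)/a, ln (a\<^sup>2))"
      using Phi_G(2)[OF _ D0 G'] y by (simp add: w2 vec_Tr)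
    show ?thesis
    proof (cases "a > 0")
      case True
      have "F_map a b c = ((c-b)/a, (c+b)/a, ln (a\<^sup>2))"
        using True by (simp add: F_map_def ln_realpow)
      then show ?thesis unfolding w_def[symmetric] P Tinj G mat_neg_def using True det D0 by (simp add: memB)
    next
      case neg: False
      then have an: "-a > 0" using \<open>a \<noteq> 0\<close> by simp
      have "ln (a\<^sup>2) = ln ((-a)\<^sup>2)" by (simp only: power2_minus)
      also have "\<dots> = 2 * ln (-a)" by (simp only: ln_realpow of_nat_numeral)
      finally have l2: "ln (a\<^sup>2) = 2 * ln (-a)" .
      have e1: "-c - -b = -(c-b)" "-c + -b = -(c+b)" by simp_all
      have "F_map (-a) (-b) (-c) = ((c-b)/a, (c+b)/a, ln (a\<^sup>2))"
        unfolding F_map_def e1 minus_divide_divide l2 ..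
      then show ?thesis unfolding w_def[symmetric] P Tinj G mat_neg_def using neg an det D0 by (simp add: memB)
    qed
  qed
qed




theorem lemma3p4:
  fixes X :: "(real \<times> real \<times> real) set"
  assumes "compact X"
    and "X \<subseteq> {x. 0 < fst x}"
  shows "psl2_std_vol (calB X) =
         (\<integral>\<^sup>+ x \<in> X. ennreal (exp (snd (snd x))) \<partial>(lborel :: (real \<times> real \<times> real) measure))"
proof -
  define K where "K = Tr ` X"
  have Kc: "compact K" unfolding K_def
    by (rule compact_continuous_image[OF continuous_on_subset[OF Tr_continuous] assms(1)]) simp
  have Kb: "K \<in> sets borel" using compact_imp_closed[OF Kc] by (rule borel_closed)
  define S' where "S' = {w \<in> S0. Phi w \<in> K}"
  have Sb: "S' \<in> sets borel" unfolding S'_def by (rule Sp_borel[OF compact_imp_closed[OF Kc]])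
  have m2: "(\<lambda>w::real^3. w $ 2) \<in> borel_measurable borel"
    by (rule borel_measurable_continuous_onI[OF nth_cont])
  have m3: "(\<lambda>w::real^3. w $ 3) \<in> borel_measurable borel"
    by (rule borel_measurable_continuous_onI[OF nth_cont])
  define g1 where "g1 = (\<lambda>w::real^3. ennreal (1/(w$2)\<^sup>2) * indicator S' w)"
  define g2 where "g2 = (\<lambda>w::real^3. ennreal (exp (w$3)) * indicator K w)"
  have g1m: "g1 \<in> borel_measurable borel" unfolding g1_def using m2 Sb by measurable
  have g2m: "g2 \<in> borel_measurable borel" unfolding g2_def using m3 Kb by measurable
  have tr: "(\<integral>\<^sup>+ p. g (Tr p) \<partial>lborel) = (\<integral>\<^sup>+ w. g w \<partial>lborel)" if "g \<in> borel_measurable borel" for g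
  proof -
    have "(\<integral>\<^sup>+ p. g (Tr p) \<partial>lborel) = (\<integral>\<^sup>+ w. g w \<partial>(distr lborel borel Tr))"
      by (rule nn_integral_distr[symmetric]) (use that in simp_all)
    then show ?thesis by (simp add: lborel_Tr)
  qed
  have lhs: "psl2_std_vol (calB X) = (\<integral>\<^sup>+ p. g1 (Tr p) \<partial>lborel)"
    unfolding psl2_std_vol_def
  proof (rule nn_integral_cong)
    fix p :: "real \<times> real \<times> real"
    obtain x y \<phi> where p: "p = (x, y, \<phi>)" by (metis prod_cases3)
    show "indicator {(x, y, \<phi>). 0 < y \<and> 0 \<le> \<phi> \<and> \<phi> < 2 * pi \<and>
                 (iwasawa x y (\<phi> / 2) \<in> calB X \<or> mat_neg (iwasawa x y (\<phi> / 2)) \<in> calB X)} p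
              * ennreal (1 / (fst (snd p))\<^sup>2) = g1 (Tr p)"
    proof (cases "0 < y")
      case True
      have "(0 < y \<and> 0 \<le> \<phi> \<and> \<phi> < 2 * pi \<and>
                 (iwasawa x y (\<phi> / 2) \<in> calB X \<or> mat_neg (iwasawa x y (\<phi> / 2)) \<in> calB X))
            \<longleftrightarrow> Tr (x,y,\<phi>) \<in> S'"
        unfolding char[OF True] S'_def S0_def K_def using True by auto
      then show ?thesis unfolding p g1_def by (simp add: indicator_def mult.commute)
    next
      case False
      then have "Tr (x,y,\<phi>) \<notin> S'" by (simp add: S'_def S0_def)
      then show ?thesis unfolding p g1_def using False by (simp add: indicator_def)
    qed
  qed
  have rhs: "(\<integral>\<^sup>+ x \<in> X. ennreal (exp (snd (snd x))) \<partial>(lborel :: (real \<times> real \<times> real) measure))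
             = (\<integral>\<^sup>+ p. g2 (Tr p) \<partial>lborel)"
  proof (rule nn_integral_cong)
    fix p :: "real \<times> real \<times> real"
    have "Tr p \<in> K \<longleftrightarrow> p \<in> X" unfolding K_def by (metis Tr_inj imageE imageI)
    then show "ennreal (exp (snd (snd p))) * indicator X p = g2 (Tr p)"
      unfolding g2_def by (simp add: indicator_def)
  qed
  have "(\<integral>\<^sup>+ w. g1 w \<partial>lborel) = (\<integral>\<^sup>+ w. g2 w \<partial>lborel)"
    unfolding g1_def g2_def S'_def by (rule main3[OF Kc])
  then show ?thesis unfolding lhs rhs tr[OF g1m] tr[OF g2m] .
qed


end
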